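(* Let $\mathscr E$ be a closed totally disconnected subset of $\mathbb S^2$, and let $\mathscr I$ be the set of all isolated points of $\mathscr E$. Assume $\mathscr I$ is infinite. If $\mathscr F$ is a finite subset of $\mathbb S^2\setminus\mathscr E$, then $\mathscr E\cup\mathscr F$ is homeomorphic to $\mathscr E$. *)

theory Defs
  imports "HOL-Analysis.Analysis"
begin

definition S2 :: "(real^3) set" where
  "S2 = sphere 0 1"

definition totally_disconnected :: "'a::topological_space set \<Rightarrow> bool" where
  "totally_disconnected S \<longleftrightarrow> (\<forall>C. C \<subseteq> S \<and> connected C \<longrightarrow> (\<exists>a. C \<subseteq> {a}))"

definition isolated_points :: "'a::topological_space set \<Rightarrow> 'a set" where
  "isolated_points S = {x \<in> S. \<not> x islimpt S}"

end

theory Submission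
  imports Defs
begin

lemma add_point_homeo:
  fixes E :: "'a::metric_space set" and x :: "nat \<Rightarrow> 'a"
  assumes cE: "compact E" and injx: "inj x" and xE: "\<And>n. x n \<in> E"
    and xiso: "\<And>n. \<not> x n islimpt E" and lim: "x \<longlonglongrightarrow> p" and pE: "p \<in> E"
    and fE: "f \<notin> E"
  shows "(E \<union> {f}) homeomorphic E"
proof -
  define h where "h z = (if z = f then x 0 else if z \<in> range x then x (Suc (inv x z)) else z)" for z
  define S where "S = E \<union> {f}"
  have hx: "h (x n) = x (Suc n)" for n
    using xE fE injx by (auto simp: h_def) 
  have hf: "h f = x 0" by (simp add: h_def)
  have hother: "h z = z" if "z \<noteq> f" "z \<notin> range x" for z using that by (simp add: h_def)
  have cE': "closed E" using cE compact_imp_closed by blast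
  have px: "p \<noteq> x n" for n
  proof
    assume "p = x n"
    then have "\<not> p islimpt E" using xiso by simp
    then obtain T where T: "open T" "p \<in> T" "\<And>y. y \<in> T \<Longrightarrow> y \<in> E \<Longrightarrow> y = p"
      unfolding islimpt_def by blast
    have "eventually (\<lambda>m. x m \<in> T) sequentially"
      using lim T(1,2) by (rule topological_tendstoD)
    then obtain N where "\<And>m. m \<ge> N \<Longrightarrow> x m \<in> T" by (auto simp: eventually_sequentially)
    then have "x N = p" "x (Suc N) = p" using T(3) xE by auto
    then show False using injx by (metis inj_eq n_not_Suc_n)
  qed
  have pf: "p \<noteq> f" using pE fE by auto
  have cont: "continuous (at z within S) h" if zS: "z \<in> S" for z
  proof (cases "z islimpt S")
    case False
    then show ?thesis unfolding continuous_within
      by (simp add: trivial_limit_within[symmetric])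
  next
    case True
    have zf: "z \<noteq> f"
    proof
      assume "z = f"
      with True have "f islimpt E \<or> f islimpt {f}" unfolding S_def islimpt_Un by simp
      then show False using cE' fE closed_limpt islimpt_finite by blast
    qed
    have zx: "z \<notin> range x"
    proof
      assume "z \<in> range x"
      then obtain n where "z = x n" by auto
      with True have "x n islimpt E \<or> x n islimpt {f}" unfolding S_def islimpt_Un by simp
      then show False using xiso islimpt_finite by blast
    qed
    show ?thesis
    proof (cases "z = p")
      case zp: True
      have "(h \<longlongrightarrow> p) (at p within S)"
      proof (rule tendstoI)
        fix e :: real assume e: "e > 0"
        obtain N where N: "\<And>n. n \<ge> N \<Longrightarrow> dist (x n) p < e"
          using lim e by (auto simp: lim_sequentially)
        have "eventually (\<lambda>y. y \<in> - insert f (x ` {..N})) (nhds p)"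
          using px pf by (intro eventually_nhds_in_open open_Int open_Compl finite_imp_closed open_ball) auto
        then have ev1: "eventually (\<lambda>y. y \<in> - insert f (x ` {..N})) (at p within S)"
          by (simp add: eventually_at_filter eventually_mono)
        have ev2: "eventually (\<lambda>y. dist y p < e) (at p within S)"
          using tendsto_ident_at e by (rule tendstoD)
        show "eventually (\<lambda>y. dist (h y) p < e) (at p within S)"
          using ev1 ev2
        proof eventually_elim
          case (elim y)
          show ?case
          proof (cases "y \<in> range x")
            case True
            then obtain m where m: "y = x m" by auto
            with elim have "m > N" by (auto simp: not_le[symmetric])
            then show ?thesis using N[of "Suc m"] m hx by simp
          next
            case False
            then show ?thesis using elim hother by auto
          qed
        qed
      qed
      then show ?thesis unfolding continuous_within using zp hother[OF zf zx] by simp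
    next
      case False
      define r where "r = dist z p / 2"
      have r: "r > 0" using False by (simp add: r_def)
      obtain N where N: "\<And>n. n \<ge> N \<Longrightarrow> dist (x n) p < r"
        using lim r by (auto simp: lim_sequentially)
      have "eventually (\<lambda>y. y \<in> - insert f (x ` {..N}) \<inter> ball z r) (nhds z)"
        using zx zf r by (intro eventually_nhds_in_open open_Int open_Compl finite_imp_closed open_ball) auto
      then have ev: "eventually (\<lambda>y. y \<in> - insert f (x ` {..N}) \<inter> ball z r) (at z within S)"
        by (simp add: eventually_at_filter eventually_mono)
      have "eventually (\<lambda>y. y = h y) (at z within S)"
        using ev
      proof eventually_elim
        case (elim y)
        have "y \<notin> range x"
        proof
          assume "y \<in> range x"
          then obtain m where m: "y = x m" by auto
          with elim have "m > N" by (auto simp: not_le[symmetric])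
          then have "dist (x m) p < r" using N by simp
          moreover have "dist z (x m) < r" using elim m by auto
          ultimately have "dist z p < 2 * r" using dist_triangle[of z p "x m"] by linarith
          then show False by (simp add: r_def)
        qed
        then show ?case using elim hother by auto
      qed
      then show ?thesis unfolding continuous_within hother[OF zf zx]
        by (rule Lim_transform_eventually[OF tendsto_ident_at])
    qed
  qed
  have contS: "continuous_on S h"
    using cont continuous_on_eq_continuous_within by blast
  have img: "h ` S = E"
  proof
    show "h ` S \<subseteq> E"
    proof
      fix w assume "w \<in> h ` S"
      then obtain z where z: "z \<in> S" "w = h z" by auto
      show "w \<in> E"
        using z xE hx hf hother[of z] unfolding S_def by (cases "z = f"; cases "z \<in> range x") auto
    qed
  next
    show "E \<subseteq> h ` S"
    proof
      fix w assume w: "w \<in> E"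
      show "w \<in> h ` S"
      proof (cases "w \<in> range x")
        case True
        then obtain n where n: "w = x n" by auto
        show ?thesis
        proof (cases n)
          case 0
          then show ?thesis using n hf by (auto simp: S_def)
        next
          case (Suc m)
          have "x m \<in> S" using xE by (simp add: S_def)
          then show ?thesis using n hx[of m] Suc by (metis rev_image_eqI)
        qed
      next
        case False
        then show ?thesis using w fE hother[of w] by (force simp: S_def)
      qed
    qed
  qed
  have inj: "inj_on h S"
  proof (rule inj_onI)
    fix a b assume a: "a \<in> S" and b: "b \<in> S" and hab: "h a = h b"
    have cls: "\<And>z. z = f \<or> (\<exists>n. z = x n) \<or> (z \<noteq> f \<and> z \<notin> range x)" by blast
    show "a = b"
      using cls[of a] cls[of b] hab hx hf hother[of a] hother[of b] injx
      by (auto simp: inj_eq)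
  qed
  have "compact S" unfolding S_def using cE by auto
  then show ?thesis
    using homeomorphism_compact[OF _ contS img inj] unfolding S_def homeomorphic_def by blast
qed


lemma add_point_homeo2:
  fixes E :: "'a::metric_space set"
  assumes cE: "compact E" and inf: "infinite (isolated_points E)" and fE: "f \<notin> E"
  shows "(E \<union> {f}) homeomorphic E"
proof -
  obtain y :: "nat \<Rightarrow> 'a" where y: "inj y" "range y \<subseteq> isolated_points E"
    using infinite_countable_subset[OF inf] by blast
  have yE: "\<forall>n. y n \<in> E" using y(2) by (auto simp: isolated_points_def)
  obtain p r where p: "p \<in> E" "strict_mono r" "(y \<circ> r) \<longlonglongrightarrow> p"
    using seq_compactE[OF compact_imp_seq_compact[OF cE] yE] by blast
  have inj: "inj (y \<circ> r)"
    using y(1) strict_mono_imp_inj_on[OF p(2)] by (simp add: inj_compose)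
  have "\<not> (y \<circ> r) n islimpt E" for n using y(2) by (auto simp: isolated_points_def)
  then show ?thesis
    using add_point_homeo[OF cE inj _ _ p(3) p(1) fE] yE by auto
qed

lemma add_finite_homeo:
  fixes E :: "'a::metric_space set"
  assumes cE: "compact E" and inf: "infinite (isolated_points E)"
    and F: "finite F" "F \<inter> E = {}"
  shows "(E \<union> F) homeomorphic E"
  using F
proof (induction F rule: finite_induct)
  case empty
  then show ?case by (simp add: homeomorphic_refl)
next
  case (insert f F)
  have c: "compact (E \<union> F)" using cE insert by (simp add: finite_imp_compact compact_Un)
  have "isolated_points E \<subseteq> isolated_points (E \<union> F)"
    using insert(1) by (auto simp: isolated_points_def islimpt_Un islimpt_finite)
  then have i: "infinite (isolated_points (E \<union> F))" using inf finite_subset by blast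
  have "((E \<union> F) \<union> {f}) homeomorphic (E \<union> F)"
    using add_point_homeo2[OF c i] insert by auto
  moreover have "E \<union> insert f F = (E \<union> F) \<union> {f}" by auto
  ultimately show ?case using insert homeomorphic_trans by fastforce
qed

theorem lemma3p7:
  fixes E F :: "(real^3) set"
  assumes "E \<subseteq> S2"
    and "closedin (top_of_set S2) E"
    and "totally_disconnected E"
    and "infinite (isolated_points E)"
    and "finite F"
    and "F \<subseteq> S2 - E"
  shows "(E \<union> F) homeomorphic E"
proof -
  have "closed E" using assms(2) closedin_closed_trans[OF assms(2)] by (simp add: S2_def)
  moreover have "bounded E" using assms(1) bounded_subset[OF bounded_sphere] by (auto simp: S2_def)
  ultimately have "compact E" by (simp add: compact_eq_bounded_closed)
  then show ?thesis using add_finite_homeo assms by blast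
qed

end
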